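(* Let $(\mathcal{L},\mathcal{D}(\mathcal{L}))$ be the generator of a $C_0$-contraction semigroup on a Banach space $\mathcal{X}$ and $M\in\mathcal{B}(\mathcal{X})$ a contraction such that there is $\tilde c>0$ with $\|M^n-\sum_{j=1}^J\lambda_j^nP_j\|_\infty\le\tilde c\,\delta^n$ for all $n\in\mathbb{N}$, for projections $\{P_j\}_{j=1}^J$ with $P_jP_k=1_{j=k}P_j$, $|\lambda_j|=1$, and $\delta\in(0,1)$. Let $P_\Sigma=\sum_{j=1}^JP_j$, assume $M\mathcal{L}$ and $\mathcal{L}P_\Sigma$ are densely defined and bounded by $b\ge0$, $\|P_j\|_\infty=1$ for all $j\in\{1,\dots,J,\Sigma\}$, and put $c_p=\|\mathbf{1}-P_\Sigma\|_\infty$. Let $\tilde\delta\in(\delta,1)$. Then there are $\epsilon_1>0$ and $c_2\ge0$ such that for all $t\ge0$ and $n\in\mathbb{N}$ with $t\in[0,n\epsilon_1]$, $$\Big\|\big(Me^{\frac tn\mathcal{L}}\big)^n-\big(P_\Sigma Me^{\frac tn\mathcal{L}}P_\Sigma\big)^n\Big\|_\infty\le c_2\tilde\delta^n+\frac{tb}{n}+\frac1n\,\frac{tbc_pc_2(2+tbc_pc_2)(\tilde\delta-\tilde\delta^n)}{1-\tilde\delta}e^{2tbc_pc_2}.$$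
   Context: $\mathcal{B}(\mathcal{X})$: bounded operators with operator norm $\|\cdot\|_\infty$; $\mathbf{1}$ the identity; contraction: norm at most $1$; projection: bounded idempotent. A $C_0$-contraction semigroup is a strongly continuous semigroup of contractions, denoted $e^{t\mathcal{L}}$ by its generator. A densely defined operator bounded by $b$ is identified with its bounded extension to $\mathcal{X}$ of norm at most $b$. $1_{j=k}$ is $1$ if $j=k$ and $0$ otherwise. *)

theory Defs
  imports "HOL-Analysis.Analysis"
begin

class complex_vector = real_vector +
  fixes scaleC :: "complex \<Rightarrow> 'a \<Rightarrow> 'a"
  assumes scaleC_add_right: "scaleC a (x + y) = scaleC a x + scaleC a y"
    and scaleC_add_left: "scaleC (a + b) x = scaleC a x + scaleC b x"
    and scaleC_scaleC: "scaleC a (scaleC b x) = scaleC (a * b) x"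
    and scaleC_one: "scaleC 1 x = x"
    and scaleR_scaleC: "scaleR r x = scaleC (complex_of_real r) x"

class complex_normed_vector = complex_vector + real_normed_vector +
  assumes norm_scaleC: "norm (scaleC a x) = cmod a * norm x"

text \<open>Bounded (complex-)linear operators on X, i.e. elements of B(X);
  the operator norm is the library's onorm.\<close>

definition bop :: "('a::complex_normed_vector \<Rightarrow> 'a) \<Rightarrow> bool" where
  "bop f \<longleftrightarrow> bounded_linear f \<and> (\<forall>c x. f (scaleC c x) = scaleC c (f x))"

definition c0_contraction_semigroup :: "(real \<Rightarrow> 'a::complex_normed_vector \<Rightarrow> 'a) \<Rightarrow> bool" where
  "c0_contraction_semigroup T \<longleftrightarrow>
     T 0 = id \<and>
     (\<forall>s\<ge>0. \<forall>t\<ge>0. T (s + t) = T s \<circ> T t) \<and>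
     (\<forall>t\<ge>0. bop (T t) \<and> onorm (T t) \<le> 1) \<and>
     (\<forall>x. ((\<lambda>t. T t x) \<longlongrightarrow> x) (at_right 0))"

definition is_generator ::
  "(real \<Rightarrow> 'a::complex_normed_vector \<Rightarrow> 'a) \<Rightarrow> 'a set \<Rightarrow> ('a \<Rightarrow> 'a) \<Rightarrow> bool" where
  "is_generator T D L \<longleftrightarrow>
     D = {x. \<exists>y. ((\<lambda>h. (1 / h) *\<^sub>R (T h x - x)) \<longlongrightarrow> y) (at_right 0)} \<and>
     (\<forall>x\<in>D. ((\<lambda>h. (1 / h) *\<^sub>R (T h x - x)) \<longlongrightarrow> L x) (at_right 0))"

end

theory Submission
  imports Defs
begin



lemma bl_funpow: "bounded_linear (f::'a::real_normed_vector \<Rightarrow> 'a) \<Longrightarrow> bounded_linear (f ^^ n)"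
proof (induction n)
  case 0
  have "f ^^ 0 = (\<lambda>x. x)" by auto
  then show ?case by (simp only:) (rule bounded_linear_ident)
next
  case (Suc n)
  have "f ^^ Suc n = (\<lambda>x. f ((f ^^ n) x))" by auto
  then show ?case using Suc bounded_linear_compose by metis
qed

lemma bl_add: "bounded_linear f \<Longrightarrow> f (x + y) = f x + f y"
  by (simp add: linear_add bounded_linear.linear)
lemma bl_diff: "bounded_linear f \<Longrightarrow> f (x - y) = f x - f y"
  by (simp add: linear_diff bounded_linear.linear)
lemma bl_scaleR: "bounded_linear f \<Longrightarrow> f (c *\<^sub>R x) = c *\<^sub>R f x"
  by (simp add: linear_scale bounded_linear.linear)
lemma bl_zero: "bounded_linear f \<Longrightarrow> f 0 = 0"
  by (simp add: linear_0 bounded_linear.linear)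

lemma bl_sum: "bounded_linear f \<Longrightarrow> f (sum g S) = (\<Sum>x\<in>S. f (g x))"
  by (simp add: linear_sum bounded_linear.linear)

lemma duhamel:
  fixes F G Y :: "'a::real_normed_vector \<Rightarrow> 'a"
  assumes F: "bounded_linear F" and FGY: "\<And>y. F y = G y + Y y"
  shows "(F ^^ n) y = (G ^^ n) y + (\<Sum>k<n. (F ^^ k) (Y ((G ^^ (n - 1 - k)) y)))"
proof (induction n)
  case 0 then show ?case by simp
next
  case (Suc n)
  have "(F ^^ Suc n) y = F ((F ^^ n) y)" by simp
  also have "\<dots> = F ((G ^^ n) y) + (\<Sum>k<n. F ((F ^^ k) (Y ((G ^^ (n - 1 - k)) y))))"
    by (simp add: Suc bl_add[OF F] bl_sum[OF F])
  also have "\<dots> = (G ^^ Suc n) y + Y ((G ^^ n) y) + (\<Sum>k<n. (F ^^ Suc k) (Y ((G ^^ (Suc n - 1 - Suc k)) y)))"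
    by (simp add: FGY)
  also have "\<dots> = (G ^^ Suc n) y + (\<Sum>k<Suc n. (F ^^ k) (Y ((G ^^ (Suc n - 1 - k)) y)))"
    unfolding sum.lessThan_Suc_shift by (simp del: funpow.simps)
  finally show ?case .
qed

lemma geo_le: "0 \<le> (d::real) \<Longrightarrow> d < 1 \<Longrightarrow> (\<Sum>k<n. d ^ k) \<le> 1 / (1 - d)"
proof -
  assume d: "0 \<le> d" "d < 1"
  have "(\<Sum>k<n. d ^ k) = (1 - d ^ n) / (1 - d)"
    using d by (simp add: sum_gp_strict)
  also have "\<dots> \<le> 1 / (1 - d)" using d by (simp add: divide_right_mono)
  finally show ?thesis .
qed

lemma geo2: "(\<Sum>k<n. (b::real) * (1 + b) ^ k) = (1 + b) ^ n - 1"
  by (induction n) (auto simp: algebra_simps)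

lemma contr_funpow:
  fixes F :: "'a::real_normed_vector \<Rightarrow> 'a"
  assumes "\<And>y. norm (F y) \<le> norm y"
  shows "norm ((F ^^ k) y) \<le> norm y"
proof (induction k)
  case 0 show ?case by simp
next
  case (Suc k)
  show ?case using assms[of "(F ^^ k) y"] Suc by simp
qed

lemma core:
  fixes A M X P :: "'a::real_normed_vector \<Rightarrow> 'a"
  assumes A: "bounded_linear A" and M: "bounded_linear M" and P: "bounded_linear P"
    and X: "bounded_linear X"
    and AMX: "\<And>y. A y = M y + X y"
    and Acontr: "\<And>y. norm (A y) \<le> norm y"
    and Mcontr: "\<And>y. norm (M y) \<le> norm y"
    and Pcontr: "\<And>y. norm (P y) \<le> norm y"
    and Xb: "\<And>y. norm (X y) \<le> \<beta> * norm y"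
    and PP: "\<And>y. P (P y) = P y"
    and PMP: "\<And>y. P (M (P y)) = M (P y)"
    and MQ: "\<And>j y. norm ((M ^^ j) y - (M ^^ j) (P y)) \<le> C * \<delta> ^ j * norm y"
    and C: "0 \<le> C" and \<delta>: "0 \<le> \<delta>" "\<delta> < 1" and \<beta>: "0 \<le> \<beta>"
  shows "norm ((A ^^ n) y - ((\<lambda>y. P (A (P y))) ^^ n) y)
           \<le> (C * \<delta> ^ n + (2 * C / (1 - \<delta>)) * \<beta> * (1 + \<beta>) ^ n) * norm y"
proof -
  define B where "B = (\<lambda>y. P (A (P y)))"
  define N where "N = (\<lambda>y. M (P y))"
  define Z where "Z = (\<lambda>y. P (X (P y)))"
  define R where "R = 2 * C / (1 - \<delta>)"
  define e where "e = (\<lambda>k::nat. C * \<delta> ^ k + R * \<beta> * (1 + \<beta>) ^ k)"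
  have R0: "0 \<le> R" using C \<delta> by (simp add: R_def)
  have e0: "0 \<le> e k" for k using C \<delta> \<beta> R0 by (simp add: e_def)
  have BNZ: "B y = N y + Z y" for y
    by (simp add: B_def N_def Z_def AMX bl_add[OF P] PMP)
  have Bbl: "bounded_linear B" unfolding B_def
    by (intro bounded_linear_compose[OF P] bounded_linear_compose[OF A] P)
  have PMj: "P ((M ^^ j) (P y)) = (M ^^ j) (P y)" for j y
  proof (induction j)
    case 0 then show ?case by (simp add: PP)
  next
    case (Suc j)
    have "P ((M ^^ Suc j) (P y)) = P (M (P ((M ^^ j) (P y))))" using Suc by simp
    also have "\<dots> = M (P ((M ^^ j) (P y)))" by (rule PMP)
    finally show ?case using Suc by simp
  qed
  have NS: "(N ^^ Suc j) y = (M ^^ Suc j) (P y)" for j y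
  proof (induction j)
    case 0 then show ?case by (simp add: N_def)
  next
    case (Suc j)
    have "(N ^^ Suc (Suc j)) y = M (P ((M ^^ Suc j) (P y)))" using Suc by (simp add: N_def)
    also have "\<dots> = (M ^^ Suc (Suc j)) (P y)" using PMj[of "Suc j" y] by simp
    finally show ?case .
  qed
  have PN: "P ((N ^^ j) y) = (M ^^ j) (P y)" for j y
  proof (cases j)
    case 0 then show ?thesis by simp
  next
    case (Suc i) then show ?thesis by (simp only: NS PMj)
  qed
  have ZN: "Z ((N ^^ j) y) = P (X ((M ^^ j) (P y)))" for j y
    by (simp add: Z_def PN)
  have BP: "k \<ge> 1 \<Longrightarrow> (B ^^ k) (P w) = (B ^^ k) w" for k w
  proof -
    assume "k \<ge> 1"
    then obtain i where k: "k = Suc i" by (cases k) auto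
    have "B (P w) = B w" by (simp add: B_def PP)
    then show ?thesis unfolding k funpow_Suc_right by simp
  qed
  have Ak: "norm ((A ^^ k) z) \<le> norm z" for k z by (rule contr_funpow[OF Acontr])
  have Mk: "norm ((M ^^ k) z) \<le> norm z" for k z by (rule contr_funpow[OF Mcontr])
  have Akbl: "bounded_linear (A ^^ k)" for k by (rule bl_funpow[OF A])
  have main: "norm ((A ^^ n) y - (B ^^ n) y) \<le> e n * norm y" for n y
  proof (induction n arbitrary: y rule: less_induct)
    case (less n)
    show ?case
    proof (cases n)
      case 0 then show ?thesis using e0[of 0] by simp
    next
      case (Suc m)
      define j where "j = (\<lambda>k. n - 1 - k)"
      define w where "w = (\<lambda>k. X ((M ^^ j k) (P y)))"
      have dA: "(A ^^ n) y = (M ^^ n) y + (\<Sum>k<n. (A ^^ k) (X ((M ^^ j k) y)))"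
        unfolding j_def by (rule duhamel[OF A AMX])
      have dB: "(B ^^ n) y = (N ^^ n) y + (\<Sum>k<n. (B ^^ k) (Z ((N ^^ j k) y)))"
        unfolding j_def by (rule duhamel[OF Bbl BNZ])
      have NN: "(N ^^ n) y = (M ^^ n) (P y)" using NS Suc by simp
      have eq: "(A ^^ n) y - (B ^^ n) y = ((M ^^ n) y - (M ^^ n) (P y))
          + (\<Sum>k<n. (A ^^ k) (X ((M ^^ j k) y - (M ^^ j k) (P y)))
                    + ((A ^^ k) (w k) - (B ^^ k) (P (w k))))"
        unfolding dA dB NN ZN w_def
        by (simp add: bl_diff[OF Akbl] bl_diff[OF X] sum_subtractf[symmetric] sum.distrib)
      have t1: "norm ((M ^^ n) y - (M ^^ n) (P y)) \<le> C * \<delta> ^ n * norm y" by (rule MQ)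
      have t2: "norm ((A ^^ k) (X ((M ^^ j k) y - (M ^^ j k) (P y))))
                 \<le> \<beta> * C * \<delta> ^ j k * norm y" for k
      proof -
        have "norm ((A ^^ k) (X ((M ^^ j k) y - (M ^^ j k) (P y))))
              \<le> norm (X ((M ^^ j k) y - (M ^^ j k) (P y)))" by (rule Ak)
        also have "\<dots> \<le> \<beta> * norm ((M ^^ j k) y - (M ^^ j k) (P y))" by (rule Xb)
        also have "\<dots> \<le> \<beta> * (C * \<delta> ^ j k * norm y)" using \<beta> MQ by (rule mult_left_mono[rotated])
        finally show ?thesis by (simp add: mult.assoc)
      qed
      have wb: "norm (w k) \<le> \<beta> * norm y" for k
      proof -
        have "norm (w k) \<le> \<beta> * norm ((M ^^ j k) (P y))" unfolding w_def by (rule Xb)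
        also have "\<dots> \<le> \<beta> * norm y" using Mk Pcontr \<beta> order_trans by (blast intro: mult_left_mono)
        finally show ?thesis .
      qed
      have t3: "norm ((A ^^ k) (w k) - (B ^^ k) (P (w k))) \<le> e k * \<beta> * norm y" if "k < n" for k
      proof -
        have "norm ((A ^^ k) (w k) - (B ^^ k) (P (w k))) \<le> e k * norm (w k)"
        proof (cases k)
          case 0
          have "norm (w k - P (w k)) \<le> C * \<delta> ^ 0 * norm (w k)" using MQ[of 0 "w k"] by simp
          moreover have "C \<le> e 0" using R0 \<beta> by (simp add: e_def)
          ultimately show ?thesis using 0 by (simp add: order_trans mult_right_mono)
        next
          case (Suc i)
          then have "(B ^^ k) (P (w k)) = (B ^^ k) (w k)" using BP[of k "w k"] by (simp del: funpow.simps)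
          then show ?thesis using less.IH[OF that] by (simp add: B_def)
        qed
        also have "\<dots> \<le> e k * (\<beta> * norm y)" using wb e0 by (rule mult_left_mono) 
        finally show ?thesis by (simp add: mult.assoc)
      qed
      have hj: "(\<Sum>k<n. \<delta> ^ j k) = (\<Sum>k<n. \<delta> ^ k)"
          unfolding j_def using sum.nat_diff_reindex[of "\<lambda>k. \<delta> ^ k" n] by simp
      have "norm ((A ^^ n) y - (B ^^ n) y) \<le> C * \<delta> ^ n * norm y
           + (\<Sum>k<n. \<beta> * C * \<delta> ^ j k * norm y + e k * \<beta> * norm y)"
        unfolding eq
        apply (rule order_trans[OF norm_triangle_ineq])
        apply (rule add_mono[OF t1])
        apply (rule order_trans[OF norm_sum])
        apply (rule sum_mono)
        apply (rule order_trans[OF norm_triangle_ineq])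
        apply (rule add_mono[OF t2 t3])
        apply simp
        done
      also have "\<dots> = (C * \<delta> ^ n + \<beta> * C * (\<Sum>k<n. \<delta> ^ j k) + C * \<beta> * (\<Sum>k<n. \<delta> ^ k)
           + R * \<beta> * (\<Sum>k<n. \<beta> * (1 + \<beta>) ^ k)) * norm y"
        by (simp add: e_def sum.distrib sum_distrib_left sum_distrib_right algebra_simps)
      also have "\<dots> = (C * \<delta> ^ n + \<beta> * C * (\<Sum>k<n. \<delta> ^ k) + C * \<beta> * (\<Sum>k<n. \<delta> ^ k)
           + R * \<beta> * (\<Sum>k<n. \<beta> * (1 + \<beta>) ^ k)) * norm y" by (simp only: hj)
      also have "\<dots> \<le> e n * norm y"
      proof (rule mult_right_mono)
        have g: "(\<Sum>k<n. \<delta> ^ k) \<le> 1 / (1 - \<delta>)" by (rule geo_le[OF \<delta>])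
        have "\<beta> * C * (\<Sum>k<n. \<delta> ^ k) \<le> \<beta> * C * (1 / (1 - \<delta>))"
          using g \<beta> C by (intro mult_left_mono) simp_all
        moreover have hR: "R * \<beta> = 2 * (\<beta> * C * (1 / (1 - \<delta>)))" by (simp add: R_def)
        ultimately have h0: "2 * (\<beta> * C * (\<Sum>k<n. \<delta> ^ k)) \<le> R * \<beta>" by linarith
        have h1: "R * \<beta> * ((1 + \<beta>) ^ n - 1) = R * \<beta> * (1 + \<beta>) ^ n - R * \<beta>"
          by (simp add: algebra_simps)
        have h2: "C * \<beta> * (\<Sum>k<n. \<delta> ^ k) = \<beta> * C * (\<Sum>k<n. \<delta> ^ k)" by simp
        show "C * \<delta> ^ n + \<beta> * C * (\<Sum>k<n. \<delta> ^ k) + C * \<beta> * (\<Sum>k<n. \<delta> ^ k)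
           + R * \<beta> * (\<Sum>k<n. \<beta> * (1 + \<beta>) ^ k) \<le> e n"
          unfolding geo2 e_def h1 h2 using h0 by linarith
      qed simp
      finally show ?thesis by (simp add: B_def)
    qed
  qed
  show ?thesis using main[of n y] by (simp add: B_def e_def R_def)
qed




lemma bopD: "bop f \<Longrightarrow> bounded_linear f" by (simp add: bop_def)

lemma sgD:
  assumes "c0_contraction_semigroup T"
  shows "T 0 = id"
    and "s \<ge> 0 \<Longrightarrow> t \<ge> 0 \<Longrightarrow> T (s + t) x = T s (T t x)"
    and "t \<ge> 0 \<Longrightarrow> bounded_linear (T t)"
    and "t \<ge> 0 \<Longrightarrow> norm (T t x) \<le> norm x"
proof -
  show "T 0 = id" using assms by (simp add: c0_contraction_semigroup_def)
  show "s \<ge> 0 \<Longrightarrow> t \<ge> 0 \<Longrightarrow> T (s + t) x = T s (T t x)"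
    using assms by (simp add: c0_contraction_semigroup_def)
  show bl: "t \<ge> 0 \<Longrightarrow> bounded_linear (T t)"
    using assms by (simp add: c0_contraction_semigroup_def bop_def)
  assume t: "t \<ge> 0"
  have "onorm (T t) \<le> 1" using assms t by (simp add: c0_contraction_semigroup_def)
  moreover have "norm (T t x) \<le> onorm (T t) * norm x" by (rule onorm[OF bl[OF t]])
  ultimately have "onorm (T t) * norm x \<le> 1 * norm x" by (intro mult_right_mono) simp_all
  with \<open>norm (T t x) \<le> onorm (T t) * norm x\<close> show "norm (T t x) \<le> norm x" by linarith
qed

lemma gen_comm:
  fixes T :: "real \<Rightarrow> 'a::complex_normed_vector \<Rightarrow> 'a"
  assumes sg: "c0_contraction_semigroup T" and gen: "is_generator T D L"
    and y: "y \<in> D" and r: "r \<ge> 0"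
  shows "T r y \<in> D" "L (T r y) = T r (L y)"
proof -
  have lim: "((\<lambda>h. (1 / h) *\<^sub>R (T h y - y)) \<longlongrightarrow> L y) (at_right 0)"
    using gen y by (simp add: is_generator_def)
  have blT: "bounded_linear (T r)" using sgD(3)[OF sg r] .
  have l2: "((\<lambda>h. T r ((1 / h) *\<^sub>R (T h y - y))) \<longlongrightarrow> T r (L y)) (at_right 0)"
    by (rule bounded_linear.tendsto[OF blT lim])
  have ev: "eventually (\<lambda>h. T r ((1 / h) *\<^sub>R (T h y - y)) = (1 / h) *\<^sub>R (T h (T r y) - T r y)) (at_right 0)"
    using eventually_at_right_less[of "0::real"]
  proof (rule eventually_mono)
    fix h :: real assume h: "0 < h"
    have "T h (T r y) = T (h + r) y" using sgD(2)[OF sg, of h r y] h r by simp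
    also have "\<dots> = T r (T h y)" using sgD(2)[OF sg, of r h y] h r by (simp add: add.commute)
    finally show "T r ((1 / h) *\<^sub>R (T h y - y)) = (1 / h) *\<^sub>R (T h (T r y) - T r y)"
      by (simp add: bl_scaleR[OF blT] bl_diff[OF blT])
  qed
  have l3: "((\<lambda>h. (1 / h) *\<^sub>R (T h (T r y) - T r y)) \<longlongrightarrow> T r (L y)) (at_right 0)"
    using tendsto_cong[OF ev] l2 by simp
  then show D: "T r y \<in> D" using gen by (auto simp: is_generator_def)
  have "((\<lambda>h. (1 / h) *\<^sub>R (T h (T r y) - T r y)) \<longlongrightarrow> L (T r y)) (at_right 0)"
    using gen D by (simp add: is_generator_def)
  then show "L (T r y) = T r (L y)"
    using l3 tendsto_unique[OF trivial_limit_at_right_real] by blast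
qed

lemma X_bound_D:
  fixes T :: "real \<Rightarrow> 'a::complex_normed_vector \<Rightarrow> 'a"
  assumes sg: "c0_contraction_semigroup T" and gen: "is_generator T D L"
    and M: "bounded_linear M" and Mc: "\<And>z. norm (M z) \<le> norm z"
    and bML: "\<forall>x\<in>D. norm (M (L x)) \<le> b * norm x" and b: "b \<ge> 0"
    and s: "s \<ge> 0" and y: "y \<in> D"
  shows "norm (M (T s y) - M y) \<le> s * b * norm y"
proof (cases "s = 0")
  case True then show ?thesis using sgD(1)[OF sg] by simp
next
  case False
  then have s0: "s > 0" using s by simp
  define q where "q = (\<lambda>h. (1 / h) *\<^sub>R (T h y - y))"
  have lim: "(q \<longlongrightarrow> L y) (at_right 0)"
    using gen y by (simp add: is_generator_def q_def)
  show ?thesis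
  proof (rule field_le_epsilon)
    fix e :: real assume e: "0 < e"
    have "eventually (\<lambda>h. dist (q h) (L y) < e / s) (at_right 0)"
      using lim e s0 by (simp add: tendsto_iff)
    then obtain d where d: "d > 0" "\<And>h. h > 0 \<Longrightarrow> h < d \<Longrightarrow> dist (q h) (L y) < e / s"
      unfolding eventually_at_right_field by auto
    obtain N :: nat where N: "s / d < real N" using reals_Archimedean2 by blast
    have "s / d > 0" using s0 d by simp
    then have Npos: "real N > 0" using N by linarith
    define h where "h = s / real N"
    have h0: "h > 0" using s0 Npos by (simp add: h_def)
    have "s < d * real N" using N d(1) by (simp add: pos_divide_less_eq mult.commute)
    then have hd: "h < d" using Npos by (simp add: h_def pos_divide_less_eq mult.commute)
    have Nh: "real N * h = s" using Npos by (simp add: h_def)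
    have qd: "dist (q h) (L y) < e / s" using d(2)[OF h0 hd] .
    have trm: "T (real (Suc i) * h) y - T (real i * h) y = h *\<^sub>R T (real i * h) (q h)" for i
    proof -
      have ih: "real i * h \<ge> 0" using h0 by simp
      have blT: "bounded_linear (T (real i * h))" using sgD(3)[OF sg ih] .
      have "T (real (Suc i) * h) y = T (real i * h) (T h y)"
        using sgD(2)[OF sg ih, of h y] h0 by (simp add: distrib_right add.commute)
      moreover have "h *\<^sub>R q h = T h y - y" using h0 by (simp add: q_def)
      ultimately show ?thesis by (simp add: bl_scaleR[OF blT, symmetric] bl_diff[OF blT, symmetric])
    qed
    have tel: "T s y - y = (\<Sum>i<N. h *\<^sub>R T (real i * h) (q h))"
    proof -
      have "(\<Sum>i<N. T (real (Suc i) * h) y - T (real i * h) y) = T (real N * h) y - T (real 0 * h) y"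
        by (rule sum_lessThan_telescope)
      moreover have "(\<Sum>i<N. T (real (Suc i) * h) y - T (real i * h) y) = (\<Sum>i<N. h *\<^sub>R T (real i * h) (q h))"
        by (intro sum.cong refl trm)
      ultimately show ?thesis using Nh sgD(1)[OF sg] by simp
    qed
    have pt: "norm (M (T (real i * h) (q h))) \<le> b * norm y + e / s" for i
    proof -
      have ih: "real i * h \<ge> 0" using h0 by simp
      have blT: "bounded_linear (T (real i * h))" using sgD(3)[OF sg ih] .
      have "M (T (real i * h) (q h)) = M (L (T (real i * h) y)) + M (T (real i * h) (q h - L y))"
        using gen_comm[OF sg gen y ih] by (simp add: bl_diff[OF blT] bl_diff[OF M])
      moreover have "norm (M (L (T (real i * h) y))) \<le> b * norm y"
      proof -
        have "norm (M (L (T (real i * h) y))) \<le> b * norm (T (real i * h) y)"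
          using bML gen_comm(1)[OF sg gen y ih] by blast
        also have "\<dots> \<le> b * norm y" using sgD(4)[OF sg ih] b by (rule mult_left_mono)
        finally show ?thesis .
      qed
      moreover have "norm (M (T (real i * h) (q h - L y))) \<le> e / s"
      proof -
        have "norm (M (T (real i * h) (q h - L y))) \<le> norm (q h - L y)"
          using Mc sgD(4)[OF sg ih] order_trans by blast
        then show ?thesis using qd by (simp add: dist_norm)
      qed
      ultimately show ?thesis
        using norm_triangle_ineq[of "M (L (T (real i * h) y))" "M (T (real i * h) (q h - L y))"] by simp
    qed
    have "M (T s y) - M y = (\<Sum>i<N. h *\<^sub>R M (T (real i * h) (q h)))"
    proof -
      have "M (T s y) - M y = M (T s y - y)" by (simp add: bl_diff[OF M])
      also have "\<dots> = (\<Sum>i<N. M (h *\<^sub>R T (real i * h) (q h)))" unfolding tel by (rule bl_sum[OF M])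
      finally show ?thesis by (simp add: bl_scaleR[OF M])
    qed
    then have "norm (M (T s y) - M y) \<le> (\<Sum>i<N. h * (b * norm y + e / s))"
    proof -
      have "norm (M (T s y) - M y) \<le> (\<Sum>i<N. norm (h *\<^sub>R M (T (real i * h) (q h))))"
        unfolding \<open>M (T s y) - M y = _\<close> by (rule norm_sum)
      also have "\<dots> \<le> (\<Sum>i<N. h * (b * norm y + e / s))"
      proof (rule sum_mono)
        fix i show "norm (h *\<^sub>R M (T (real i * h) (q h))) \<le> h * (b * norm y + e / s)"
          using h0 pt[of i] by (simp add: mult_left_mono)
      qed
      finally show ?thesis .
    qed
    also have "\<dots> = real N * h * (b * norm y + e / s)" by simp
    also have "\<dots> = s * b * norm y + e" using Nh s0 by (simp add: field_simps)
    finally show "norm (M (T s y) - M y) \<le> s * b * norm y + e" .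
  qed
qed

lemma X_bound:
  fixes T :: "real \<Rightarrow> 'a::complex_normed_vector \<Rightarrow> 'a"
  assumes sg: "c0_contraction_semigroup T" and gen: "is_generator T D L"
    and M: "bounded_linear M" and Mc: "\<And>z. norm (M z) \<le> norm z"
    and bML: "\<forall>x\<in>D. norm (M (L x)) \<le> b * norm x" and b: "b \<ge> 0"
    and dense: "closure D = UNIV"
    and s: "s \<ge> 0"
  shows "norm (M (T s y) - M y) \<le> s * b * norm y"
proof -
  have bl: "bounded_linear (\<lambda>x. M (T s x) - M x)"
    by (intro bounded_linear_sub bounded_linear_compose[OF M] sgD(3)[OF sg s] M)
  have c1: "continuous_on UNIV (\<lambda>x. norm (M (T s x) - M x))"
    by (intro continuous_on_norm linear_continuous_on bl)
  have c2: "continuous_on UNIV (\<lambda>x. s * b * norm x)"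
    by (intro continuous_intros)
  have cl: "closed {x. norm (M (T s x) - M x) \<le> s * b * norm x}"
    by (rule closed_Collect_le[OF c1 c2])
  have "D \<subseteq> {x. norm (M (T s x) - M x) \<le> s * b * norm x}"
    using X_bound_D[OF sg gen M Mc bML b s] by blast
  then have "closure D \<subseteq> {x. norm (M (T s x) - M x) \<le> s * b * norm x}"
    using cl closure_minimal by blast
  then show ?thesis using dense by auto
qed




lemma scaleC_zero: "scaleC a (0::'a::complex_vector) = 0"
proof -
  have "scaleC a (0::'a) = scaleC a 0 + scaleC a 0" using scaleC_add_right[of a "0::'a" 0] by simp
  then show ?thesis by simp
qed

lemma scaleC_diff: "scaleC a (x - y) = scaleC a x - scaleC a (y::'a::complex_vector)"
  using scaleC_add_right[of a "x - y" y] by (simp add: algebra_simps)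

lemma scaleC_comm: "scaleC a (scaleC b x) = scaleC b (scaleC a (x::'a::complex_vector))"
  by (simp add: scaleC_scaleC mult.commute)

lemma bop_scaleC: "bop f \<Longrightarrow> f (scaleC c x) = scaleC c (f x)"
  by (simp add: bop_def)

lemma bl_scaleC:
  fixes f :: "'a::complex_normed_vector \<Rightarrow> 'b::complex_normed_vector"
  assumes f: "bounded_linear f"
  shows "bounded_linear (\<lambda>x. scaleC c (f x))"
proof -
  obtain K where K: "\<And>x. norm (f x) \<le> norm x * K" using bounded_linear.bounded[OF f] by blast
  show ?thesis
  proof (rule bounded_linear_intro[where K = "cmod c * K"])
    show "scaleC c (f (x + y)) = scaleC c (f x) + scaleC c (f y)" for x y
      by (simp add: bl_add[OF f] scaleC_add_right)
    show "scaleC c (f (r *\<^sub>R x)) = r *\<^sub>R scaleC c (f x)" for r x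
    proof -
      have "scaleC c (f (r *\<^sub>R x)) = scaleC c (r *\<^sub>R f x)" by (simp add: bl_scaleR[OF f])
      also have "\<dots> = r *\<^sub>R scaleC c (f x)" by (simp only: scaleR_scaleC) (rule scaleC_comm)
      finally show ?thesis .
    qed
    show "norm (scaleC c (f x)) \<le> norm x * (cmod c * K)" for x
    proof -
      have "cmod c * norm (f x) \<le> cmod c * (norm x * K)" using K[of x] by (intro mult_left_mono) auto
      then show ?thesis by (simp add: norm_scaleC mult.left_commute)
    qed
  qed
qed

lemma small_zero:
  fixes a K d :: real
  assumes a: "0 \<le> a" and h: "\<And>n. n \<ge> 1 \<Longrightarrow> a \<le> K * d ^ n" and d: "0 < d" "d < 1"
  shows "a = 0"
proof (rule ccontr)
  assume "a \<noteq> 0"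
  then have a0: "a > 0" using a by simp
  show False
  proof (cases "K \<le> 0")
    case True
    then have "K * d ^ 1 \<le> 0" using d by (simp add: mult_nonpos_nonneg)
    then show False using h[of 1] a0 by simp
  next
    case False
    then have K0: "K > 0" by simp
    obtain n where n: "d ^ n < a / K" using real_arch_pow_inv[of "a / K" d] a0 K0 d by auto
    have "d ^ Suc n \<le> d ^ n" using d by (intro power_decreasing) auto
    then have "K * d ^ Suc n \<le> K * d ^ n" using K0 by (intro mult_left_mono) auto
    moreover have "K * d ^ n < a" using n K0 by (simp add: pos_less_divide_eq mult.commute)
    ultimately have "K * d ^ Suc n < a" by linarith
    then show False using h[of "Suc n"] by simp
  qed
qed

lemma spectral:
  fixes M :: "'a::complex_normed_vector \<Rightarrow> 'a" and P :: "nat \<Rightarrow> 'a \<Rightarrow> 'a"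
  assumes M_bop: "bop M" and Mc: "\<And>z. norm (M z) \<le> norm z"
    and P_orth: "\<forall>j\<in>{1..J}. \<forall>k\<in>{1..J}. P j \<circ> P k = (if j = k then P j else (\<lambda>x. 0))"
    and lam_abs: "\<forall>j\<in>{1..J}. cmod (lam j) = 1"
    and \<delta>: "0 < \<delta>" "\<delta> < 1"
    and specp: "\<And>n x. n \<ge> 1 \<Longrightarrow> norm ((M ^^ n) x - (\<Sum>j=1..J. scaleC (lam j ^ n) (P j x))) \<le> ct * \<delta> ^ n * norm x"
    and k: "k \<in> {1..J}" and ct: "ct > 0"
  shows "M (P k y) = scaleC (lam k) (P k y)"
proof -
  define z where "z = P k y"
  have Mbl: "bounded_linear M" using M_bop by (rule bopD)
  have Pjz: "j \<in> {1..J} \<Longrightarrow> P j z = (if j = k then z else 0)" for j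
    using P_orth k unfolding z_def by (metis comp_apply)
  have hsum: "(\<Sum>j=1..J. scaleC (lam j ^ n) (P j z)) = scaleC (lam k ^ n) z" for n
  proof -
    have "(\<Sum>j=1..J. scaleC (lam j ^ n) (P j z)) = (\<Sum>j=1..J. if j = k then scaleC (lam k ^ n) z else 0)"
      by (intro sum.cong refl) (simp add: Pjz scaleC_zero)
    also have "\<dots> = scaleC (lam k ^ n) z" using k by simp
    finally show ?thesis .
  qed
  have an: "n \<ge> 1 \<Longrightarrow> norm ((M ^^ n) z - scaleC (lam k ^ n) z) \<le> ct * \<delta> ^ n * norm z" for n
    using specp[of n z, unfolded hsum] by simp
  have ct0: "0 \<le> ct" using ct by simp
  have key: "norm (M z - scaleC (lam k) z) \<le> (2 * ct * norm z) * \<delta> ^ n" if n: "n \<ge> 1" for n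
  proof -
    have l1: "cmod (lam k ^ n) = 1" using lam_abs k by (simp add: norm_power)
    have "norm (M z - scaleC (lam k) z) = norm (scaleC (lam k ^ n) (M z - scaleC (lam k) z))"
      by (simp add: norm_scaleC l1)
    also have "scaleC (lam k ^ n) (M z - scaleC (lam k) z)
        = (M (scaleC (lam k ^ n) z) - M ((M ^^ n) z)) + ((M ^^ Suc n) z - scaleC (lam k ^ Suc n) z)"
      by (simp add: scaleC_diff bop_scaleC[OF M_bop] scaleC_scaleC mult.commute)
    also have "norm \<dots> \<le> norm (M (scaleC (lam k ^ n) z) - M ((M ^^ n) z)) + norm ((M ^^ Suc n) z - scaleC (lam k ^ Suc n) z)"
      by (rule norm_triangle_ineq)
    also have "\<dots> \<le> ct * \<delta> ^ n * norm z + ct * \<delta> ^ n * norm z"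
    proof (rule add_mono)
      have "norm (M (scaleC (lam k ^ n) z) - M ((M ^^ n) z)) = norm (M (scaleC (lam k ^ n) z - (M ^^ n) z))"
        by (simp add: bl_diff[OF Mbl])
      also have "\<dots> \<le> norm (scaleC (lam k ^ n) z - (M ^^ n) z)" by (rule Mc)
      also have "\<dots> \<le> ct * \<delta> ^ n * norm z" using an[OF n] by (simp add: norm_minus_commute)
      finally show "norm (M (scaleC (lam k ^ n) z) - M ((M ^^ n) z)) \<le> ct * \<delta> ^ n * norm z" .
      have "\<delta> ^ Suc n \<le> \<delta> ^ n" using \<delta> by (intro power_decreasing) auto
      then have "ct * \<delta> ^ Suc n * norm z \<le> ct * \<delta> ^ n * norm z"
        using ct0 by (intro mult_right_mono mult_left_mono) auto
      then show "norm ((M ^^ Suc n) z - scaleC (lam k ^ Suc n) z) \<le> ct * \<delta> ^ n * norm z"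
        using an[of "Suc n"] by simp
    qed
    finally show ?thesis by (simp add: algebra_simps)
  qed
  have "norm (M z - scaleC (lam k) z) = 0"
    by (rule small_zero[OF norm_ge_zero key \<delta>])
  then show ?thesis by (simp add: z_def)
qed




lemma final_ineq:
  fixes C R \<beta> cp c2 \<delta> \<delta>' t b :: real and n :: nat
  assumes n: "n \<ge> 2" and C: "0 \<le> C" "C \<le> c2" and \<delta>: "0 < \<delta>" "\<delta> < \<delta>'" "\<delta>' < 1"
    and \<beta>: "\<beta> = t / real n * b" and t: "t \<ge> 0" and b: "b \<ge> 0"
    and cp: "cp > 0" "1 \<le> cp * c2" and R: "R \<le> 2 * cp * c2 * \<delta>'" "0 \<le> R"
  shows "C * \<delta> ^ n + R * \<beta> * (1 + \<beta>) ^ n \<le> c2 * \<delta>' ^ n + t * b / real n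
     + (1 / real n) * (t * b * cp * c2 * (2 + t * b * cp * c2) * (\<delta>' - \<delta>' ^ n) / (1 - \<delta>'))
       * exp (2 * t * b * cp * c2)"
proof -
  define z where "z = t * b * cp * c2"
  have np: "real n > 0" using n by simp
  have b0: "\<beta> \<ge> 0" using \<beta> t b np by simp
  have tb: "t * b = real n * \<beta>" using \<beta> np by simp
  have tb0: "t * b \<ge> 0" using t b by simp
  have z: "z = real n * \<beta> * (cp * c2)" using tb by (simp add: z_def mult.assoc)
  have z0: "z \<ge> 0" using z b0 cp by simp
  have h1: "C * \<delta> ^ n \<le> c2 * \<delta>' ^ n"
    using C \<delta> by (intro mult_mono power_mono) auto
  have h2: "0 \<le> t * b / real n" using tb0 np by simp
  have h3: "(1 + \<beta>) ^ n \<le> exp (2 * z)"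
  proof -
    have "(1 + \<beta>) ^ n \<le> exp \<beta> ^ n" using b0 by (intro power_mono) auto
    also have "\<dots> = exp (real n * \<beta>)" by (simp add: exp_of_nat_mult)
    also have "real n * \<beta> \<le> 2 * z"
    proof -
      have "real n * \<beta> * 1 \<le> real n * \<beta> * (cp * c2)" using cp b0 np by (intro mult_left_mono) auto
      then show ?thesis using z z0 by linarith
    qed
    then have "exp (real n * \<beta>) \<le> exp (2 * z)" by simp
    finally show ?thesis .
  qed
  have h4: "\<delta>' \<le> (\<delta>' - \<delta>' ^ n) / (1 - \<delta>')"
  proof -
    have "\<delta>' ^ n \<le> \<delta>' ^ 2" using n \<delta> by (intro power_decreasing) auto
    then have "\<delta>' * (1 - \<delta>') \<le> \<delta>' - \<delta>' ^ n" by (simp add: power2_eq_square algebra_simps)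
    then show ?thesis using \<delta> by (simp add: pos_le_divide_eq)
  qed
  have h5: "R * \<beta> \<le> (1 / real n) * (z * (2 + z) * (\<delta>' - \<delta>' ^ n) / (1 - \<delta>'))"
  proof -
    have e: "(1 / real n) * (z * (2 + z) * (\<delta>' - \<delta>' ^ n) / (1 - \<delta>'))
        = (\<beta> * (cp * c2)) * ((2 + z) * ((\<delta>' - \<delta>' ^ n) / (1 - \<delta>')))"
    proof -
      have e1: "z * (2 + z) * (\<delta>' - \<delta>' ^ n) / (1 - \<delta>') = z * ((2 + z) * ((\<delta>' - \<delta>' ^ n) / (1 - \<delta>')))"
        by simp
      have e2: "(1 / real n) * z = \<beta> * (cp * c2)" using np z by simp
      show ?thesis unfolding e1 mult.assoc[symmetric] e2 by simp
    qed
    have "R * \<beta> \<le> (\<beta> * (cp * c2)) * (2 * \<delta>')"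
    proof -
      have "R * \<beta> \<le> (2 * cp * c2 * \<delta>') * \<beta>" using R b0 by (intro mult_right_mono) auto
      then show ?thesis by (simp add: algebra_simps)
    qed
    also have "\<dots> \<le> (\<beta> * (cp * c2)) * ((2 + z) * ((\<delta>' - \<delta>' ^ n) / (1 - \<delta>')))"
    proof (rule mult_left_mono)
      show "2 * \<delta>' \<le> (2 + z) * ((\<delta>' - \<delta>' ^ n) / (1 - \<delta>'))"
        using h4 z0 \<delta> by (intro mult_mono) auto
      show "0 \<le> \<beta> * (cp * c2)" using b0 cp by simp
    qed
    finally show ?thesis using e by simp
  qed
  have h6: "R * \<beta> * (1 + \<beta>) ^ n \<le> (1 / real n) * (z * (2 + z) * (\<delta>' - \<delta>' ^ n) / (1 - \<delta>')) * exp (2 * z)"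
  proof (rule mult_mono[OF h5 h3])
    have "0 \<le> R * \<beta>" using R b0 by simp
    then show "0 \<le> (1 / real n) * (z * (2 + z) * (\<delta>' - \<delta>' ^ n) / (1 - \<delta>'))" using h5 by linarith
    show "0 \<le> (1 + \<beta>) ^ n" using b0 by simp
  qed
  show ?thesis using h1 h2 h6 unfolding z_def by (simp add: mult.assoc)
qed




theorem lemma6p3:
  fixes T :: "real \<Rightarrow> 'a::{complex_normed_vector, banach} \<Rightarrow> 'a"
    and D :: "'a set" and L :: "'a \<Rightarrow> 'a"
    and M :: "'a \<Rightarrow> 'a"
    and P :: "nat \<Rightarrow> 'a \<Rightarrow> 'a" and lam :: "nat \<Rightarrow> complex"
    and J :: nat and \<delta> \<delta>' b :: real
  assumes sg: "c0_contraction_semigroup T"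
    and gen: "is_generator T D L"
    and M_bop: "bop M" and M_contr: "onorm M \<le> 1"
    and spec: "\<exists>ct>0. \<forall>n\<ge>1. onorm (\<lambda>x. (M ^^ n) x - (\<Sum>j=1..J. scaleC (lam j ^ n) (P j x))) \<le> ct * \<delta> ^ n"
    and P_bop: "\<forall>j\<in>{1..J}. bop (P j)"
    and P_orth: "\<forall>j\<in>{1..J}. \<forall>k\<in>{1..J}. P j \<circ> P k = (if j = k then P j else (\<lambda>x. 0))"
    and lam_abs: "\<forall>j\<in>{1..J}. cmod (lam j) = 1"
    and \<delta>: "0 < \<delta>" "\<delta> < 1"
    and b: "b \<ge> 0"
    and dense_dom_ML: "closure D = UNIV"
    and bound_ML: "\<forall>x\<in>D. norm (M (L x)) \<le> b * norm x"
    and dense_dom_LP: "closure {x. (\<Sum>j=1..J. P j x) \<in> D} = UNIV"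
    and bound_LP: "\<forall>x. (\<Sum>j=1..J. P j x) \<in> D \<longrightarrow> norm (L (\<Sum>j=1..J. P j x)) \<le> b * norm x"
    and P_norm: "\<forall>j\<in>{1..J}. onorm (P j) = 1"
    and PS_norm: "onorm (\<lambda>x. \<Sum>j=1..J. P j x) = 1"
    and \<delta>': "\<delta> < \<delta>'" "\<delta>' < 1"
  shows "\<exists>\<epsilon>1>0. \<exists>c2\<ge>0. \<forall>t::real. \<forall>n::nat.
           t \<ge> 0 \<and> n \<ge> 1 \<and> t \<le> real n * \<epsilon>1 \<longrightarrow>
           (let PS = (\<lambda>x. \<Sum>j=1..J. P j x);
                cp = onorm (\<lambda>x. x - PS x);
                Mt = M \<circ> T (t / real n)
            in onorm (\<lambda>x. (Mt ^^ n) x - ((PS \<circ> Mt \<circ> PS) ^^ n) x)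
               \<le> c2 * \<delta>' ^ n + t * b / real n
                 + (1 / real n) * (t * b * cp * c2 * (2 + t * b * cp * c2) * (\<delta>' - \<delta>' ^ n) / (1 - \<delta>'))
                   * exp (2 * t * b * cp * c2))"
proof -
  obtain ct where ct: "ct > 0"
    and ctb: "\<forall>n\<ge>1. onorm (\<lambda>x. (M ^^ n) x - (\<Sum>j=1..J. scaleC (lam j ^ n) (P j x))) \<le> ct * \<delta> ^ n"
    using spec by blast
  define PS where "PS = (\<lambda>x. \<Sum>j=1..J. P j x)"
  have Mbl: "bounded_linear M" using M_bop by (rule bopD)
  have Mc: "norm (M z) \<le> norm z" for z
  proof -
    have "norm (M z) \<le> onorm M * norm z" by (rule onorm[OF Mbl])
    also have "\<dots> \<le> 1 * norm z" using M_contr by (intro mult_right_mono) auto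
    finally show ?thesis by simp
  qed
  have Pbl: "j \<in> {1..J} \<Longrightarrow> bounded_linear (P j)" for j using P_bop bopD by blast
  have PSbl: "bounded_linear PS" unfolding PS_def by (rule bounded_linear_sum) (rule Pbl)
  have Pc: "norm (PS z) \<le> norm z" for z
    using onorm[OF PSbl, of z] PS_norm by (simp add: PS_def)
  have specp: "norm ((M ^^ n) x - (\<Sum>j=1..J. scaleC (lam j ^ n) (P j x))) \<le> ct * \<delta> ^ n * norm x"
    if n: "n \<ge> 1" for n x
  proof -
    have bl: "bounded_linear (\<lambda>x. (M ^^ n) x - (\<Sum>j=1..J. scaleC (lam j ^ n) (P j x)))"
      by (intro bounded_linear_sub bl_funpow[OF Mbl] bounded_linear_sum bl_scaleC Pbl)
    have "norm ((M ^^ n) x - (\<Sum>j=1..J. scaleC (lam j ^ n) (P j x)))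
        \<le> onorm (\<lambda>x. (M ^^ n) x - (\<Sum>j=1..J. scaleC (lam j ^ n) (P j x))) * norm x"
      by (rule onorm[OF bl])
    also have "\<dots> \<le> ct * \<delta> ^ n * norm x" using ctb n by (intro mult_right_mono) auto
    finally show ?thesis .
  qed
  have eig: "k \<in> {1..J} \<Longrightarrow> M (P k y) = scaleC (lam k) (P k y)" for k y
    by (rule spectral[OF M_bop Mc P_orth lam_abs \<delta> specp _ ct])
  have PPk: "k \<in> {1..J} \<Longrightarrow> PS (P k y) = P k y" for k y
  proof -
    assume k: "k \<in> {1..J}"
    have "PS (P k y) = (\<Sum>j=1..J. if j = k then P k y else 0)"
      unfolding PS_def
    proof (intro sum.cong refl)
      fix j assume j: "j \<in> {1..J}"
      have h: "P j \<circ> P k = (if j = k then P j else (\<lambda>x. 0))" using P_orth k j by blast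
      have "P j (P k y) = (P j \<circ> P k) y" by simp
      also have "\<dots> = (if j = k then P k y else 0)" unfolding h by simp
      finally show "P j (P k y) = (if j = k then P k y else 0)" .
    qed
    also have "\<dots> = P k y" using k by simp
    finally show ?thesis .
  qed
  have PP: "PS (PS y) = PS y" for y
  proof -
    have e: "PS y = (\<Sum>k=1..J. P k y)" by (simp add: PS_def)
    have "PS (PS y) = (\<Sum>k=1..J. PS (P k y))" by (simp only: e bl_sum[OF PSbl])
    also have "\<dots> = (\<Sum>k=1..J. P k y)" by (intro sum.cong refl) (simp add: PPk)
    also have "\<dots> = PS y" by (simp add: PS_def)
    finally show ?thesis .
  qed
  have PMP: "PS (M (PS y)) = M (PS y)" for y
  proof -
    have MPS: "M (PS y) = (\<Sum>k=1..J. P k (scaleC (lam k) y))"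
    proof -
      have "M (PS y) = (\<Sum>k=1..J. M (P k y))" unfolding PS_def by (rule bl_sum[OF Mbl])
      also have "\<dots> = (\<Sum>k=1..J. P k (scaleC (lam k) y))"
        by (intro sum.cong refl) (simp add: eig bop_scaleC P_bop)
      finally show ?thesis .
    qed
    have "PS (M (PS y)) = (\<Sum>k=1..J. PS (P k (scaleC (lam k) y)))" unfolding MPS by (rule bl_sum[OF PSbl])
    also have "\<dots> = M (PS y)" unfolding MPS by (intro sum.cong refl) (simp add: PPk)
    finally show ?thesis .
  qed
  have MnPk: "k \<in> {1..J} \<Longrightarrow> (M ^^ n) (P k y) = scaleC (lam k ^ n) (P k y)" for k n y
  proof (induction n)
    case 0 then show ?case by (simp add: scaleC_one)
  next
    case (Suc n)
    then show ?case
      by (simp add: bop_scaleC[OF M_bop] eig scaleC_scaleC mult.commute)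
  qed
  have MnP: "(M ^^ n) (PS y) = (\<Sum>j=1..J. scaleC (lam j ^ n) (P j y))" for n y
  proof -
    have "(M ^^ n) (PS y) = (\<Sum>j=1..J. (M ^^ n) (P j y))" unfolding PS_def by (rule bl_sum[OF bl_funpow[OF Mbl]])
    also have "\<dots> = (\<Sum>j=1..J. scaleC (lam j ^ n) (P j y))" by (intro sum.cong refl) (simp add: MnPk)
    finally show ?thesis .
  qed
  define C where "C = max ct 2"
  have C2: "2 \<le> C" "ct \<le> C" by (simp_all add: C_def)
  have MQ: "norm ((M ^^ j) y - (M ^^ j) (PS y)) \<le> C * \<delta> ^ j * norm y" for j y
  proof (cases j)
    case 0
    have "norm (y - PS y) \<le> norm y + norm (PS y)" by (rule norm_triangle_ineq4)
    also have "\<dots> \<le> 2 * norm y" using Pc[of y] by simp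
    also have "\<dots> \<le> C * norm y" using C2 by (intro mult_right_mono) auto
    finally show ?thesis using 0 by simp
  next
    case (Suc i)
    then have j1: "j \<ge> 1" by simp
    have "norm ((M ^^ j) y - (M ^^ j) (PS y)) \<le> ct * \<delta> ^ j * norm y"
      unfolding MnP by (rule specp[OF j1])
    also have "\<dots> \<le> C * \<delta> ^ j * norm y" using C2 \<delta> by (intro mult_right_mono) auto
    finally show ?thesis .
  qed
  define R where "R = 2 * C / (1 - \<delta>)"
  have R0: "0 \<le> R" using C2 \<delta> by (simp add: R_def)
  define cp where "cp = onorm (\<lambda>x. x - PS x)"
  have Qbl: "bounded_linear (\<lambda>x. x - PS x)" by (intro bounded_linear_sub bounded_linear_ident PSbl)
  have cp0: "cp \<ge> 0" unfolding cp_def by (rule onorm_pos_le[OF Qbl])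
  define c2 where "c2 = max (max C (2 / \<delta>')) (max (1 / cp) (R / (2 * cp * \<delta>')))"
  have c2C: "C \<le> c2" and c2d: "2 / \<delta>' \<le> c2" and c2cp: "1 / cp \<le> c2" and c2R: "R / (2 * cp * \<delta>') \<le> c2"
    by (simp_all add: c2_def)
  show ?thesis
  proof (rule exI[of _ "1::real"], rule conjI, simp, rule exI[of _ c2], rule conjI)
    show "0 \<le> c2" using c2C C2 by linarith
  next
    show "\<forall>t n. 0 \<le> t \<and> 1 \<le> n \<and> t \<le> real n * 1 \<longrightarrow> (let PS = (\<lambda>x. \<Sum>j=1..J. P j x);
                cp = onorm (\<lambda>x. x - PS x);
                Mt = M \<circ> T (t / real n)
            in onorm (\<lambda>x. (Mt ^^ n) x - ((PS \<circ> Mt \<circ> PS) ^^ n) x)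
               \<le> c2 * \<delta>' ^ n + t * b / real n
                 + (1 / real n) * (t * b * cp * c2 * (2 + t * b * cp * c2) * (\<delta>' - \<delta>' ^ n) / (1 - \<delta>'))
                   * exp (2 * t * b * cp * c2))"
    proof (intro allI impI)
    have c20: "0 \<le> c2" using c2C C2 by linarith
    fix t :: real and n :: nat
    assume tn: "0 \<le> t \<and> 1 \<le> n \<and> t \<le> real n * 1"
    then have t: "t \<ge> 0" and n: "n \<ge> 1" by auto
    define s where "s = t / real n"
    have s: "s \<ge> 0" using t n by (simp add: s_def)
    define Mt where "Mt = (\<lambda>y. M (T s y))"
    define X where "X = (\<lambda>y. M (T s y) - M y)"
    define \<beta> where "\<beta> = s * b"
    have \<beta>0: "\<beta> \<ge> 0" using s b by (simp add: \<beta>_def)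
    have Tbl: "bounded_linear (T s)" by (rule sgD(3)[OF sg s])
    have Mtbl: "bounded_linear Mt" unfolding Mt_def by (rule bounded_linear_compose[OF Mbl Tbl])
    have Xbl: "bounded_linear X" unfolding X_def by (intro bounded_linear_sub bounded_linear_compose[OF Mbl Tbl] Mbl)
    have Mtc: "norm (Mt y) \<le> norm y" for y unfolding Mt_def by (rule order_trans[OF Mc sgD(4)[OF sg s]])
    have Xb: "norm (X y) \<le> \<beta> * norm y" for y
      unfolding X_def \<beta>_def by (rule X_bound[OF sg gen Mbl Mc bound_ML b dense_dom_ML s])
    have bnd: "norm ((Mt ^^ n) y - ((\<lambda>y. PS (Mt (PS y))) ^^ n) y)
        \<le> (C * \<delta> ^ n + (2 * C / (1 - \<delta>)) * \<beta> * (1 + \<beta>) ^ n) * norm y" for y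
      by (rule core[OF Mtbl Mbl PSbl Xbl _ Mtc Mc Pc Xb PP PMP MQ])
         (use C2 \<delta> \<beta>0 in \<open>auto simp: Mt_def X_def\<close>)
    have triv: "norm ((Mt ^^ n) y - ((\<lambda>y. PS (Mt (PS y))) ^^ n) y) \<le> 2 * norm y" for y
    proof -
      have Bc: "norm (PS (Mt (PS z))) \<le> norm z" for z by (rule order_trans[OF Pc order_trans[OF Mtc Pc]])
      have "norm ((Mt ^^ n) y - ((\<lambda>y. PS (Mt (PS y))) ^^ n) y)
          \<le> norm ((Mt ^^ n) y) + norm (((\<lambda>y. PS (Mt (PS y))) ^^ n) y)" by (rule norm_triangle_ineq4)
      also have "\<dots> \<le> norm y + norm y" by (intro add_mono contr_funpow Mtc Bc)
      finally show ?thesis by simp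
    qed
    have eqf: "(\<lambda>x. ((M \<circ> T (t / real n)) ^^ n) x - ((PS \<circ> (M \<circ> T (t / real n)) \<circ> PS) ^^ n) x)
        = (\<lambda>x. (Mt ^^ n) x - ((\<lambda>y. PS (Mt (PS y))) ^^ n) x)"
      by (simp add: Mt_def s_def comp_def)
    have RHS0: "0 \<le> c2 * \<delta>' ^ n + t * b / real n
                 + (1 / real n) * (t * b * cp * c2 * (2 + t * b * cp * c2) * (\<delta>' - \<delta>' ^ n) / (1 - \<delta>'))
                   * exp (2 * t * b * cp * c2)" if "cp = 0"
      using that c20 \<delta>' \<delta> t b by simp
    have main: "onorm (\<lambda>x. (Mt ^^ n) x - ((\<lambda>y. PS (Mt (PS y))) ^^ n) x)
               \<le> c2 * \<delta>' ^ n + t * b / real n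
                 + (1 / real n) * (t * b * cp * c2 * (2 + t * b * cp * c2) * (\<delta>' - \<delta>' ^ n) / (1 - \<delta>'))
                   * exp (2 * t * b * cp * c2)"
    proof (cases "cp = 0")
      case True
      have "PS y = y" for y
      proof -
        have "norm (y - PS y) \<le> cp * norm y" unfolding cp_def by (rule onorm[OF Qbl])
        then show ?thesis using True by simp
      qed
      then have "(\<lambda>x. (Mt ^^ n) x - ((\<lambda>y. PS (Mt (PS y))) ^^ n) x) = (\<lambda>x. 0)" by simp
      then show ?thesis using RHS0[OF True] by (simp add: onorm_zero)
    next
      case False
      then have cpp: "cp > 0" using cp0 by simp
      have o2: "onorm (\<lambda>x. (Mt ^^ n) x - ((\<lambda>y. PS (Mt (PS y))) ^^ n) x) \<le> 2"
        by (rule onorm_bound) (use triv in auto)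
      have ob: "onorm (\<lambda>x. (Mt ^^ n) x - ((\<lambda>y. PS (Mt (PS y))) ^^ n) x)
          \<le> C * \<delta> ^ n + R * \<beta> * (1 + \<beta>) ^ n"
        by (rule onorm_bound) (use bnd C2 \<delta> R0 \<beta>0 in \<open>auto simp: R_def\<close>)
      have third0: "0 \<le> (1 / real n) * (t * b * cp * c2 * (2 + t * b * cp * c2) * (\<delta>' - \<delta>' ^ n) / (1 - \<delta>'))
                   * exp (2 * t * b * cp * c2)"
      proof -
        have "\<delta>' ^ n \<le> \<delta>'" using n \<delta>' \<delta> using power_decreasing[of 1 n \<delta>'] by simp
        then show ?thesis using t b cpp c20 \<delta>' n by (intro mult_nonneg_nonneg divide_nonneg_pos) auto
      qed
      show ?thesis
      proof (cases "n = 1")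
        case True
        have "2 \<le> c2 * \<delta>'" using c2d \<delta> \<delta>' by (simp add: pos_divide_le_eq)
        moreover have "0 \<le> t * b / real n" using t b by simp
        ultimately show ?thesis using o2 third0 True by simp
      next
        case False
        then have n2: "n \<ge> 2" using n by simp
        have "1 \<le> cp * c2" using c2cp cpp by (simp add: divide_le_eq mult.commute)
        moreover have "R \<le> 2 * cp * c2 * \<delta>'" using c2R cpp \<delta> \<delta>' by (simp add: divide_le_eq mult.commute mult.left_commute)
        ultimately have "C * \<delta> ^ n + R * \<beta> * (1 + \<beta>) ^ n \<le> c2 * \<delta>' ^ n + t * b / real n
           + (1 / real n) * (t * b * cp * c2 * (2 + t * b * cp * c2) * (\<delta>' - \<delta>' ^ n) / (1 - \<delta>'))
             * exp (2 * t * b * cp * c2)"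
          using final_ineq[OF n2 _ c2C \<delta>(1) \<delta>' _ t b cpp _ _ R0, of \<beta>] C2 by (simp add: \<beta>_def s_def)
        then show ?thesis using ob by linarith
      qed
    qed
    show "let PS = (\<lambda>x. \<Sum>j=1..J. P j x);
                cp = onorm (\<lambda>x. x - PS x);
                Mt = M \<circ> T (t / real n)
            in onorm (\<lambda>x. (Mt ^^ n) x - ((PS \<circ> Mt \<circ> PS) ^^ n) x)
               \<le> c2 * \<delta>' ^ n + t * b / real n
                 + (1 / real n) * (t * b * cp * c2 * (2 + t * b * cp * c2) * (\<delta>' - \<delta>' ^ n) / (1 - \<delta>'))
                   * exp (2 * t * b * cp * c2)"
      unfolding Let_def PS_def[symmetric] cp_def[symmetric] eqf by (rule main)
  qed
  qed
qed


end
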